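(* For $k\ge 1$, rectangular reduction gives a bijection $\mathrm{red}:\mathcal M^{\Box}_{2k}\to\mathcal N_k$. In particular $M^\Box_{2k}=N_k$.
   Context: Colorings. Each square is colored water or land. Two distinct squares are adjacent if they share an edge after all edge identifications; a set of squares is connected if its induced adjacency graph is connected (empty set counts as connected). (N1): the water is connected. For an interior (non-boundary) vertex $v$, its square-degree is the number of distinct squares having $v$ as a corner. (N2$\Box$): no interior vertex of square-degree $4$ has all incident squares water. A $2\times k$ Nurikabe rectangle is a coloring of the $2\times k$ grid (no identifications) with connected water and no $2\times 2$ block of water squares; $\mathcal N_k$ is the set of these, $N_k=|\mathcal N_k|$. Tile $[0,n]\times[0,1]$ by unit squares $[j-1,j]\times[0,1]$, called square $j$. The $1\times n$ Möbius strip identifies $(x,1)\sim(n-x,0)$ for $x\in[0,n]$; its boundary is the image of the vertical sides. $\mathcal M^\Box_n$ is the set of colorings of the $1\times n$ Möbius strip satisfying (N1) and (N2$\Box$), $M^\Box_n=|\mathcal M^\Box_n|$. Rectangular reduction: for a coloring of the $1\times 2k$ Möbius strip, $\mathrm{red}$ gives the coloring of the $2\times k$ grid whose column $j$ ($1\le j\le k$) has top square colored as square $j$ and bottom square colored as square $2k+1-j$. *)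

theory Defs
  imports Main "HOL-Library.FuncSet"
begin

(* A coloring is a function from squares to bool: True = water, False = land.
   Colorings are extensional (value undefined off the square set), via PiE. *)

definition connected_set :: "('s \<Rightarrow> 's \<Rightarrow> bool) \<Rightarrow> 's set \<Rightarrow> bool" where
  "connected_set adj S \<longleftrightarrow>
     (\<forall>x\<in>S. \<forall>y\<in>S. (x, y) \<in> {(a, b). a \<in> S \<and> b \<in> S \<and> adj a b}\<^sup>*)"

definition water :: "('s \<Rightarrow> bool) \<Rightarrow> 's set \<Rightarrow> 's set" where
  "water c Sq = {s \<in> Sq. c s}"

(* ---------- 2 x k grid: squares (r, j), r = 1 top row, r = 2 bottom row, 1 <= j <= k ---------- *)

definition grid_sq :: "nat \<Rightarrow> (nat \<times> nat) set" where
  "grid_sq k = {1, 2} \<times> {1..k}"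

definition grid_adj :: "nat \<times> nat \<Rightarrow> nat \<times> nat \<Rightarrow> bool" where
  "grid_adj p q \<longleftrightarrow>
     (snd p = snd q \<and> fst p \<noteq> fst q) \<or>
     (fst p = fst q \<and> (snd q = snd p + 1 \<or> snd p = snd q + 1))"

definition Nurikabe_rect :: "nat \<Rightarrow> (nat \<times> nat \<Rightarrow> bool) set" where
  "Nurikabe_rect k =
     {c \<in> grid_sq k \<rightarrow>\<^sub>E (UNIV :: bool set).
        connected_set grid_adj (water c (grid_sq k)) \<and>
        \<not> (\<exists>j. 1 \<le> j \<and> j < k \<and> c (1, j) \<and> c (2, j) \<and> c (1, j + 1) \<and> c (2, j + 1))}"

definition N_num :: "nat \<Rightarrow> nat" where
  "N_num k = card (Nurikabe_rect k)"

(* ---------- 1 x n Moebius strip ----------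
   Square j = [j-1,j] x [0,1], 1 <= j <= n.  Identification (x,1) ~ (n-x,0).
   Edges after identification: vertical edge at x = i is VE i (these are not identified);
   the horizontal edge [a-1,a] x {0} (bottom of square a) is HE a; the top edge of square j,
   [j-1,j] x {1}, is identified with [n-j, n-j+1] x {0}, i.e. HE (n+1-j).
   Vertices after identification: (i,0) is vertex i, and (i,1) ~ (n-i,0) is vertex n-i.
   Boundary (image of the vertical sides x=0, x=n) contains exactly the vertices 0 and n. *)

datatype medge = VE nat | HE nat

definition mob_sq :: "nat \<Rightarrow> nat set" where
  "mob_sq n = {1..n}"

definition mob_edges :: "nat \<Rightarrow> nat \<Rightarrow> medge set" where
  "mob_edges n j = {VE (j - 1), VE j, HE j, HE (n + 1 - j)}"

definition mob_corners :: "nat \<Rightarrow> nat \<Rightarrow> nat set" where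
  "mob_corners n j = {j - 1, j, n - (j - 1), n - j}"

definition mob_adj :: "nat \<Rightarrow> nat \<Rightarrow> nat \<Rightarrow> bool" where
  "mob_adj n a b \<longleftrightarrow> a \<noteq> b \<and> mob_edges n a \<inter> mob_edges n b \<noteq> {}"

definition mob_interior_vertex :: "nat \<Rightarrow> nat \<Rightarrow> bool" where
  "mob_interior_vertex n v \<longleftrightarrow> 0 < v \<and> v < n"

definition mob_squares_at :: "nat \<Rightarrow> nat \<Rightarrow> nat set" where
  "mob_squares_at n v = {j \<in> mob_sq n. v \<in> mob_corners n j}"

definition Mobius_box :: "nat \<Rightarrow> (nat \<Rightarrow> bool) set" where
  "Mobius_box n =
     {c \<in> mob_sq n \<rightarrow>\<^sub>E (UNIV :: bool set).
        connected_set (mob_adj n) (water c (mob_sq n)) \<and>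
        (\<forall>v. mob_interior_vertex n v \<and> card (mob_squares_at n v) = 4 \<longrightarrow>
               \<not> (\<forall>j \<in> mob_squares_at n v. c j))}"

definition M_box_num :: "nat \<Rightarrow> nat" where
  "M_box_num n = card (Mobius_box n)"

definition red :: "nat \<Rightarrow> (nat \<Rightarrow> bool) \<Rightarrow> (nat \<times> nat \<Rightarrow> bool)" where
  "red k c = (\<lambda>(r, j). if (r, j) \<in> grid_sq k
                         then (if r = 1 then c j else c (2 * k + 1 - j))
                         else undefined)"

end

theory Submission
  imports Defs
begin

lemma conn_image:
  assumes "\<forall>x\<in>W. \<forall>y\<in>W. adj x y \<longrightarrow> adj' (f x) (f y)" "connected_set adj W"
  shows "connected_set adj' (f ` W)"
  unfolding connected_set_def
proof (intro ballI)
  fix a b assume "a \<in> f ` W" "b \<in> f ` W"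
  then obtain x y where xy: "x \<in> W" "y \<in> W" "a = f x" "b = f y" by blast
  have "(x, y) \<in> {(a, b). a \<in> W \<and> b \<in> W \<and> adj a b}\<^sup>*"
    using assms(2) xy unfolding connected_set_def by blast
  then have "(f x, f y) \<in> {(a, b). a \<in> f ` W \<and> b \<in> f ` W \<and> adj' a b}\<^sup>*"
  proof (induction rule: rtrancl_induct)
    case base then show ?case by simp
  next
    case (step y z)
    then have "(f y, f z) \<in> {(a, b). a \<in> f ` W \<and> b \<in> f ` W \<and> adj' a b}"
      using assms(1) by auto
    with step show ?case by (meson rtrancl_into_rtrancl)
  qed
  then show "(a, b) \<in> {(a, b). a \<in> f ` W \<and> b \<in> f ` W \<and> adj' a b}\<^sup>*" using xy by simp
qed

lemma mob_adj_char:
  assumes "a \<in> {1..n}" "b \<in> {1..n}"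
  shows "mob_adj n a b \<longleftrightarrow> a \<noteq> b \<and> (a = b + 1 \<or> b = a + 1 \<or> a + b = n + 1)"
proof -
  have "mob_edges n a \<inter> mob_edges n b \<noteq> {} \<longleftrightarrow>
    (a-1=b-1 \<or> a-1=b \<or> a=b-1 \<or> a=b \<or> a = n+1-b \<or> n+1-a = b \<or> n+1-a=n+1-b)"
    unfolding mob_edges_def by auto
  moreover have "(a-1=b-1 \<or> a-1=b \<or> a=b-1 \<or> a=b \<or> a = n+1-b \<or> n+1-a = b \<or> n+1-a=n+1-b)
     \<longleftrightarrow> (a=b \<or> a = b + 1 \<or> b = a + 1 \<or> a + b = n + 1)"
  proof -
    have "a-1=b-1 \<longleftrightarrow> a=b" "a-1=b \<longleftrightarrow> a = b+1" "a=b-1 \<longleftrightarrow> b=a+1" "a = n+1-b \<longleftrightarrow> a+b=n+1"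
       "n+1-a = b \<longleftrightarrow> a+b=n+1" "n+1-a=n+1-b \<longleftrightarrow> a=b" using assms by auto
    then show ?thesis by (simp; blast)
  qed
  ultimately show ?thesis unfolding mob_adj_def by blast
qed

lemma squares_at:
  assumes "0 < v" "v < n"
  shows "mob_squares_at n v = {v, v+1, n+1-v, n-v}"
proof (rule set_eqI)
  fix j
  have "(j \<in> {1..n} \<and> v \<in> {j - 1, j, n - (j - 1), n - j}) \<longleftrightarrow> (j = v \<or> j = v+1 \<or> j = n+1-v \<or> j = n-v)"
  proof -
    have "j \<in> {1..n} \<and> v = j-1 \<longleftrightarrow> j = v+1" "j \<in> {1..n} \<and> v = j \<longleftrightarrow> j = v"
      "j \<in> {1..n} \<and> v = n-(j-1) \<longleftrightarrow> j = n+1-v" "j \<in> {1..n} \<and> v = n-j \<longleftrightarrow> j = n-v"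
      using assms by auto
    then show ?thesis by auto
  qed
  then show "j \<in> mob_squares_at n v \<longleftrightarrow> j \<in> {v, v+1, n+1-v, n-v}"
    unfolding mob_squares_at_def mob_sq_def mob_corners_def by blast
qed

lemma card_sq:
  assumes "0 < v" "v < 2*k"
  shows "card (mob_squares_at (2*k) v) = 4 \<longleftrightarrow> v \<noteq> k"
proof (cases "v = k")
  case True
  have "{v, v+1, 2*k+1-v, 2*k-v} = {k, k+1}" using True by auto
  then have "mob_squares_at (2*k) v = {k, k+1}" using squares_at[OF assms] by simp
  then show ?thesis using True by simp
next
  case False
  have d: "v \<noteq> v+1" "v \<noteq> 2*k+1-v" "v \<noteq> 2*k-v" "v+1 \<noteq> 2*k+1-v" "v+1 \<noteq> 2*k-v"
     "2*k+1-v \<noteq> 2*k-v" using False assms by arith+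
  have "card {v, v+1, 2*k+1-v, 2*k-v} = 4" using d by simp
  then show ?thesis using squares_at[OF assms] False by simp
qed

lemma mob_char:
  "c \<in> Mobius_box (2*k) \<longleftrightarrow> c \<in> mob_sq (2*k) \<rightarrow>\<^sub>E (UNIV :: bool set) \<and>
     connected_set (mob_adj (2*k)) (water c (mob_sq (2*k))) \<and>
     (\<forall>v. 0 < v \<and> v < 2*k \<and> v \<noteq> k \<longrightarrow> \<not> (c v \<and> c (v+1) \<and> c (2*k+1-v) \<and> c (2*k-v)))"
proof -
  have "(\<forall>v. mob_interior_vertex (2*k) v \<and> card (mob_squares_at (2*k) v) = 4 \<longrightarrow>
               \<not> (\<forall>j \<in> mob_squares_at (2*k) v. c j)) \<longleftrightarrow>
        (\<forall>v. 0 < v \<and> v < 2*k \<and> v \<noteq> k \<longrightarrow> \<not> (c v \<and> c (v+1) \<and> c (2*k+1-v) \<and> c (2*k-v)))"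
    unfolding mob_interior_vertex_def
  proof (intro iff_allI)
    fix v
    show "((0 < v \<and> v < 2 * k) \<and> card (mob_squares_at (2 * k) v) = 4 \<longrightarrow>
           \<not> (\<forall>j\<in>mob_squares_at (2 * k) v. c j)) \<longleftrightarrow>
          (0 < v \<and> v < 2 * k \<and> v \<noteq> k \<longrightarrow> \<not> (c v \<and> c (v + 1) \<and> c (2 * k + 1 - v) \<and> c (2 * k - v)))"
    proof (cases "0 < v \<and> v < 2 * k")
      case True
      then show ?thesis using card_sq[of v k] squares_at[of v "2*k"] by simp
    next
      case False
      then show ?thesis by auto
    qed
  qed
  then show ?thesis unfolding Mobius_box_def by auto
qed

definition psi :: "nat \<Rightarrow> nat \<Rightarrow> nat \<times> nat" where
  "psi k m = (if m \<le> k then (1, m) else (2, 2*k+1-m))"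

definition phi :: "nat \<Rightarrow> nat \<times> nat \<Rightarrow> nat" where
  "phi k p = (if fst p = 1 then snd p else 2*k+1-snd p)"

definition unred :: "nat \<Rightarrow> (nat \<times> nat \<Rightarrow> bool) \<Rightarrow> nat \<Rightarrow> bool" where
  "unred k g = (\<lambda>m. if m \<in> mob_sq (2*k) then g (psi k m) else undefined)"

lemma psi_in: "m \<in> mob_sq (2*k) \<Longrightarrow> psi k m \<in> grid_sq k"
  unfolding psi_def mob_sq_def grid_sq_def by auto

lemma phi_in: "p \<in> grid_sq k \<Longrightarrow> phi k p \<in> mob_sq (2*k)"
  unfolding phi_def mob_sq_def grid_sq_def by auto

lemma phi_psi: "m \<in> mob_sq (2*k) \<Longrightarrow> phi k (psi k m) = m"
  unfolding psi_def mob_sq_def phi_def by auto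

lemma psi_phi: "p \<in> grid_sq k \<Longrightarrow> psi k (phi k p) = p"
  unfolding psi_def grid_sq_def phi_def by auto

lemma red_app: "p \<in> grid_sq k \<Longrightarrow> red k c p = c (phi k p)"
  unfolding red_def phi_def by (cases p) auto

lemma unred_app: "m \<in> mob_sq (2*k) \<Longrightarrow> unred k g m = g (psi k m)"
  unfolding unred_def by simp

lemma water_red: "water (red k c) (grid_sq k) = psi k ` water c (mob_sq (2*k))"
proof
  show "water (red k c) (grid_sq k) \<subseteq> psi k ` water c (mob_sq (2*k))"
  proof
    fix p assume "p \<in> water (red k c) (grid_sq k)"
    then have p: "p \<in> grid_sq k" "c (phi k p)" unfolding water_def using red_app[of p k c] by auto
    then have "phi k p \<in> water c (mob_sq (2*k))" using phi_in unfolding water_def by auto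
    then show "p \<in> psi k ` water c (mob_sq (2*k))" using psi_phi[OF p(1)] by (metis image_eqI)
  qed
next
  show "psi k ` water c (mob_sq (2*k)) \<subseteq> water (red k c) (grid_sq k)"
    unfolding water_def using psi_in phi_psi red_app by fastforce
qed

lemma water_unred: "water (unred k g) (mob_sq (2*k)) = phi k ` water g (grid_sq k)"
proof
  show "water (unred k g) (mob_sq (2*k)) \<subseteq> phi k ` water g (grid_sq k)"
  proof
    fix m assume "m \<in> water (unred k g) (mob_sq (2*k))"
    then have m: "m \<in> mob_sq (2*k)" "g (psi k m)" unfolding water_def using unred_app by auto
    then have "psi k m \<in> water g (grid_sq k)" using psi_in unfolding water_def by auto
    then show "m \<in> phi k ` water g (grid_sq k)" using phi_psi[OF m(1)] by (metis image_eqI)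
  qed
next
  show "phi k ` water g (grid_sq k) \<subseteq> water (unred k g) (mob_sq (2*k))"
    unfolding water_def using phi_in psi_phi unred_app by fastforce
qed

lemma adj_psi:
  assumes "m \<in> mob_sq (2*k)" "m' \<in> mob_sq (2*k)" "mob_adj (2*k) m m'"
  shows "grid_adj (psi k m) (psi k m')"
proof -
  have "m \<noteq> m' \<and> (m = m' + 1 \<or> m' = m + 1 \<or> m + m' = 2*k + 1)"
    using mob_adj_char[of m "2*k" m'] assms unfolding mob_sq_def by auto
  then show ?thesis using assms unfolding psi_def grid_adj_def mob_sq_def by auto
qed

lemma adj_phi:
  assumes "p \<in> grid_sq k" "q \<in> grid_sq k" "grid_adj p q"
  shows "mob_adj (2*k) (phi k p) (phi k q)"
proof -
  have "phi k p \<noteq> phi k q \<and> (phi k p = phi k q + 1 \<or> phi k q = phi k p + 1 \<or> phi k p + phi k q = 2*k + 1)"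
    using assms unfolding phi_def grid_adj_def grid_sq_def by auto
  then show ?thesis using mob_adj_char phi_in assms unfolding mob_sq_def by auto
qed

lemma red_in:
  assumes "c \<in> Mobius_box (2*k)"
  shows "red k c \<in> Nurikabe_rect k"
proof -
  note C = assms[unfolded mob_char]
  have "red k c \<in> grid_sq k \<rightarrow>\<^sub>E (UNIV :: bool set)"
    unfolding red_def by (auto simp: PiE_def extensional_def)
  moreover have "connected_set grid_adj (water (red k c) (grid_sq k))"
    unfolding water_red
    by (rule conn_image[OF _ conjunct1[OF conjunct2[OF C]]])
       (auto simp: water_def intro: adj_psi)
  moreover have "\<not> (\<exists>j. 1 \<le> j \<and> j < k \<and> red k c (1, j) \<and> red k c (2, j) \<and> red k c (1, j + 1) \<and> red k c (2, j + 1))"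
  proof
    assume "\<exists>j. 1 \<le> j \<and> j < k \<and> red k c (1, j) \<and> red k c (2, j) \<and> red k c (1, j + 1) \<and> red k c (2, j + 1)"
    then obtain j where j: "1 \<le> j" "j < k" "red k c (1, j)" "red k c (2, j)" "red k c (1, j + 1)" "red k c (2, j + 1)"
      by blast
    have "c j" "c (2*k+1-j)" "c (j+1)" "c (2*k-j)"
      using j unfolding red_def grid_sq_def by auto
    then show False using C j by (metis less_le_trans less_numeral_extra(1) le_less_trans nat_neq_iff
          less_imp_le_nat trans_less_add1 mult_2 zero_less_one)
  qed
  ultimately show ?thesis unfolding Nurikabe_rect_def by blast
qed

lemma unred_in:
  assumes "g \<in> Nurikabe_rect k"
  shows "unred k g \<in> Mobius_box (2*k)"
proof -
  note G = assms[unfolded Nurikabe_rect_def, simplified]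
  have "unred k g \<in> mob_sq (2*k) \<rightarrow>\<^sub>E (UNIV :: bool set)"
    unfolding unred_def by (auto simp: PiE_def extensional_def)
  moreover have "connected_set (mob_adj (2*k)) (water (unred k g) (mob_sq (2*k)))"
    unfolding water_unred
    by (rule conn_image[OF _ conjunct1[OF conjunct2[OF G]]])
       (auto simp: water_def intro: adj_phi)
  moreover have "\<not> (unred k g v \<and> unred k g (v+1) \<and> unred k g (2*k+1-v) \<and> unred k g (2*k-v))"
    if v: "0 < v" "v < 2*k" "v \<noteq> k" for v
  proof
    assume H: "unred k g v \<and> unred k g (v+1) \<and> unred k g (2*k+1-v) \<and> unred k g (2*k-v)"
    have ms: "v \<in> mob_sq (2*k)" "v+1 \<in> mob_sq (2*k)" "2*k+1-v \<in> mob_sq (2*k)" "2*k-v \<in> mob_sq (2*k)"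
      using v unfolding mob_sq_def by auto
    have H2: "g (psi k v)" "g (psi k (v+1))" "g (psi k (2*k+1-v))" "g (psi k (2*k-v))"
      using H unred_app[OF ms(1)] unred_app[OF ms(2)] unred_app[OF ms(3)] unred_app[OF ms(4)] by auto
    show False
    proof (cases "v < k")
      case True
      have "psi k v = (1, v)" "psi k (v+1) = (1, v+1)" "psi k (2*k+1-v) = (2, v)" "psi k (2*k-v) = (2, v+1)"
        using True v unfolding psi_def by auto
      then have "g (1, v)" "g (2, v)" "g (1, v+1)" "g (2, v+1)" using H2 by auto
      then show False using G True v by force
    next
      case False
      define j where "j = 2*k - v"
      have jj: "1 \<le> j" "j < k" using False v unfolding j_def by auto
      have "psi k v = (2, j+1)" "psi k (v+1) = (2, j)" "psi k (2*k+1-v) = (1, j+1)" "psi k (2*k-v) = (1, j)"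
        using False v unfolding psi_def j_def by auto
      then have "g (1, j)" "g (2, j)" "g (1, j+1)" "g (2, j+1)" using H2 by auto
      then show False using G jj by force
    qed
  qed
  ultimately show ?thesis unfolding mob_char by blast
qed

theorem lemma4p2:
  fixes k :: nat
  assumes "k \<ge> 1"
  shows "bij_betw (red k) (Mobius_box (2 * k)) (Nurikabe_rect k) \<and>
         M_box_num (2 * k) = N_num k"
proof -
  have b: "bij_betw (red k) (Mobius_box (2 * k)) (Nurikabe_rect k)"
  proof (rule bij_betw_byWitness[where f' = "unred k"])
    show "\<forall>a\<in>Mobius_box (2 * k). unred k (red k a) = a"
    proof
      fix a assume a: "a \<in> Mobius_box (2 * k)"
      then have ext: "a \<in> mob_sq (2*k) \<rightarrow>\<^sub>E (UNIV :: bool set)" unfolding Mobius_box_def by blast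
      show "unred k (red k a) = a"
      proof
        fix m
        show "unred k (red k a) m = a m"
        proof (cases "m \<in> mob_sq (2*k)")
          case True
          then show ?thesis using unred_app red_app psi_in phi_psi by simp
        next
          case False
          then show ?thesis using ext unfolding unred_def by (auto simp: PiE_def extensional_def)
        qed
      qed
    qed
    show "\<forall>b\<in>Nurikabe_rect k. red k (unred k b) = b"
    proof
      fix b assume b: "b \<in> Nurikabe_rect k"
      then have ext: "b \<in> grid_sq k \<rightarrow>\<^sub>E (UNIV :: bool set)" unfolding Nurikabe_rect_def by blast
      show "red k (unred k b) = b"
      proof
        fix p
        show "red k (unred k b) p = b p"
        proof (cases "p \<in> grid_sq k")
          case True
          then show ?thesis using unred_app red_app phi_in psi_phi by simp
        next
          case False
          then show ?thesis using ext unfolding red_def by (cases p) (auto simp: PiE_def extensional_def)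
        qed
      qed
    qed
    show "red k ` Mobius_box (2 * k) \<subseteq> Nurikabe_rect k" using red_in by blast
    show "unred k ` Nurikabe_rect k \<subseteq> Mobius_box (2 * k)" using unred_in by blast
  qed
  moreover have "M_box_num (2 * k) = N_num k"
    unfolding M_box_num_def N_num_def using bij_betw_same_card[OF b] .
  ultimately show ?thesis by blast
qed

end
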